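(* Define $f_n\in\mathbb Z[X]$ by $f_0=0$, $f_1=1$, $f_{n+1}=Xf_n-f_{n-1}$. Let $R$ be a commutative ring and $M\in M_2(R)$ with $\det M=1$ such that at least one off-diagonal entry of $M$ is not a zero divisor. If $n=2k+1$ is an odd positive integer, then $M^n=-I$ holds if and only if $t=\operatorname{tr}M$ satisfies $f_{k+1}(t)-f_k(t)=0$. *)

theory Defs
  imports "HOL-Computational_Algebra.Polynomial" "Jordan_Normal_Form.Determinant"
begin

fun fpoly :: "nat \<Rightarrow> int poly" where
  "fpoly 0 = 0"
| "fpoly (Suc 0) = 1"
| "fpoly (Suc (Suc n)) = [:0, 1:] * fpoly (Suc n) - fpoly n"

definition eval_int_poly :: "int poly \<Rightarrow> 'a::comm_ring_1 \<Rightarrow> 'a" where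
  "eval_int_poly p t = poly (map_poly of_int p) t"

definition zero_divisor :: "'a::comm_ring_1 \<Rightarrow> bool" where
  "zero_divisor a \<longleftrightarrow> (\<exists>b. b \<noteq> 0 \<and> a * b = 0)"

definition mat_trace :: "'a::comm_ring_1 mat \<Rightarrow> 'a" where
  "mat_trace A = (\<Sum>i<dim_row A. A $$ (i, i))"

end

theory Submission
  imports Defs
begin

lemma det1: assumes B: "(B::'a::comm_ring_1 mat) \<in> carrier_mat 1 1" shows "det B = B$$(0,0)"
proof -
  have "dim_row B = 1" "dim_col B = 1" using B by auto
  hence "mat_delete B 0 0 \<in> carrier_mat 0 0" unfolding mat_delete_def by simp
  hence d: "det (mat_delete B 0 0) = 1" by simp
  have "det B = (\<Sum>i<1. B $$ (i,0) * cofactor B i 0)" using B by (rule laplace_expansion_column) auto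
  thus ?thesis using d by (simp add: cofactor_def)
qed
lemma det2: assumes A: "(A::'a::comm_ring_1 mat) \<in> carrier_mat 2 2" shows "det A = A$$(0,0)*A$$(1,1) - A$$(0,1)*A$$(1,0)"
proof -
  have dA: "dim_row A = 2" "dim_col A = 2" using A by auto
  have "det A = (\<Sum>i<2. A $$ (i,0) * cofactor A i 0)" using A by (rule laplace_expansion_column) auto
  also have "\<dots> = A $$ (0,0) * cofactor A 0 0 + A $$ (1,0) * cofactor A 1 0" by (simp add: numeral_2_eq_2)
  also have "cofactor A 0 0 = A$$(1,1)"
  proof -
    have c: "mat_delete A 0 0 \<in> carrier_mat 1 1" using dA unfolding mat_delete_def by simp
    have "det (mat_delete A 0 0) = mat_delete A 0 0 $$ (0,0)" by (rule det1[OF c])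
    also have "\<dots> = A$$(1,1)" using dA by (simp add: mat_delete_def insert_index_def)
    finally show ?thesis by (simp add: cofactor_def)
  qed
  also have "cofactor A 1 0 = - A$$(0,1)"
  proof -
    have c: "mat_delete A 1 0 \<in> carrier_mat 1 1" using dA unfolding mat_delete_def by simp
    have "det (mat_delete A 1 0) = mat_delete A 1 0 $$ (0,0)" by (rule det1[OF c])
    also have "\<dots> = A$$(0,1)" using dA by (simp add: mat_delete_def insert_index_def)
    finally show ?thesis by (simp add: cofactor_def)
  qed
  finally show ?thesis by (simp add: algebra_simps)
qed
fun G :: "'a::comm_ring_1 \<Rightarrow> nat \<Rightarrow> 'a" where
  "G t 0 = 0" | "G t (Suc 0) = 1" | "G t (Suc (Suc n)) = t * G t (Suc n) - G t n"

lemma mp_diff: "map_poly (of_int::int\<Rightarrow>'a::comm_ring_1) (p - q) = map_poly of_int p - map_poly of_int q"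
  by (rule poly_eqI) (simp add: coeff_map_poly)

lemma mp_x: "map_poly (of_int::int\<Rightarrow>'a::comm_ring_1) (pCons 0 p) = pCons 0 (map_poly of_int p)"
  by (rule poly_eqI) (simp add: coeff_map_poly coeff_pCons split: nat.splits)

lemma evalG: "eval_int_poly (fpoly n) t = G t n"
  by (induction n rule: fpoly.induct) (simp_all add: eval_int_poly_def mp_diff mp_x)

lemma addG: "G t (m + n + 1) = G t (m+1) * G t (n+1) - G t m * G t n"
proof (induction t n rule: G.induct)
  case (3 t n)
  have h1: "G t (Suc (Suc (m+n))) = G t (m+1) * G t (Suc (Suc n)) - G t m * G t (Suc n)"
    using 3(1) by (simp del: G.simps)
  have h2: "G t (Suc (m+n)) = G t (m+1) * G t (Suc n) - G t m * G t n"
    using 3(2) by (simp del: G.simps)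
  have a: "G t (Suc (Suc (Suc (m+n)))) = t * G t (Suc (Suc (m+n))) - G t (Suc (m+n))" by simp
  have b: "G t (Suc (Suc (Suc n))) = t * G t (Suc (Suc n)) - G t (Suc n)" by simp
  have "G t (m + Suc (Suc n) + 1) = G t (Suc (Suc (Suc (m+n))))" by simp
  also have "\<dots> = G t (m+1) * G t (Suc (Suc (Suc n))) - G t m * G t (Suc (Suc n))"
    unfolding a b h1 h2 by (simp add: algebra_simps)
  finally show ?case by simp
qed (auto simp: algebra_simps)

lemma cassini: "G t (k+1)^2 - t * G t (k+1) * G t k + G t k ^ 2 = 1"
proof (induction k)
  case (Suc k)
  then show ?case by (simp add: algebra_simps power2_eq_square)
qed simp
lemma mult2: assumes "A \<in> carrier_mat 2 2" "B \<in> carrier_mat 2 2" "i < 2" "j < 2"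
  shows "(A * B) $$ (i,j) = A$$(i,0)*B$$(0,j) + A$$(i,1)*(B$$(1,j) :: 'a::comm_ring_1)"
  using assms by (simp add: index_mult_mat scalar_prod_def numeral_2_eq_2)

lemma Mpow:
  fixes M :: "'a::comm_ring_1 mat"
  assumes A: "M \<in> carrier_mat 2 2" and d: "M$$(0,0)*M$$(1,1) - M$$(0,1)*M$$(1,0) = 1"
    and t: "t = M$$(0,0) + M$$(1,1)"
  shows "M ^\<^sub>m Suc m = mat 2 2 (\<lambda>(i,j). G t (Suc m) * M $$ (i,j) - (if i = j then G t m else 0))"
proof (induction m)
  case 0
  show ?case using A by (intro eq_matI) auto
next
  case (Suc m)
  define a where "a = M$$(0,0)"
  define b where "b = M$$(0,Suc 0)"
  define c where "c = M$$(Suc 0,0)"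
  define e where "e = M$$(Suc 0,Suc 0)"
  define u where "u = G t (Suc m)"
  define v where "v = G t m"
  have d': "b * c - a * e + 1 = 0" using d unfolding a_def b_def c_def e_def by (simp add: algebra_simps)
  have tt: "t = a + e" unfolding t a_def e_def by simp
  let ?P = "mat 2 2 (\<lambda>(i,j). G t (Suc m) * M $$ (i,j) - (if i = j then G t m else 0))"
  have P: "?P \<in> carrier_mat 2 2" by simp
  have "M ^\<^sub>m Suc (Suc m) = M ^\<^sub>m Suc m * M" by simp
  also have "\<dots> = ?P * M"
    using Suc by simp
  also have "\<dots> = mat 2 2 (\<lambda>(i,j). G t (Suc (Suc m)) * M $$ (i,j) - (if i = j then G t (Suc m) else 0))"
  proof (rule eq_matI)
    fix i j assume i: "i < dim_row (mat 2 2 (\<lambda>(i,j). G t (Suc (Suc m)) * M $$ (i,j) - (if i = j then G t (Suc m) else 0)))"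
      and j: "j < dim_col (mat 2 2 (\<lambda>(i,j). G t (Suc (Suc m)) * M $$ (i,j) - (if i = j then G t (Suc m) else 0)))"
    from i j have i2: "i = 0 \<or> i = 1" and j2: "j = 0 \<or> j = 1" by auto
    from i j have ij: "i < 2" "j < 2" by auto
    have e00: "(u * a - v) * a + (u * b) * c = (t * u - v) * a - u"
    proof -
      have "(u * a - v) * a + (u * b) * c - ((t * u - v) * a - u) = u * (b * c - a * e + 1)" unfolding tt by (simp add: algebra_simps)
      thus ?thesis using d' by simp
    qed
    have e11: "(u * c) * b + (u * e - v) * e = (t * u - v) * e - u"
    proof -
      have "(u * c) * b + (u * e - v) * e - ((t * u - v) * e - u) = u * (b * c - a * e + 1)" unfolding tt by (simp add: algebra_simps)
      thus ?thesis using d' by simp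
    qed
    have e01: "(u * a - v) * b + (u * b) * e = (t * u - v) * b" unfolding tt by (simp add: algebra_simps)
    have e10: "(u * c) * a + (u * e - v) * c = (t * u - v) * c" unfolding tt by (simp add: algebra_simps)
    show "(?P * M) $$ (i, j) =
      mat 2 2 (\<lambda>(i,j). G t (Suc (Suc m)) * M $$ (i,j) - (if i = j then G t (Suc m) else 0)) $$ (i, j)"
      unfolding mult2[OF P A ij] using i2 j2 ij
      by (elim disjE) (simp_all flip: a_def b_def c_def e_def u_def v_def add: e00 e11 e01 e10)
  qed (use A in auto)
  finally show ?case .
qed

lemma key_alg:
  fixes u v t :: "'a::comm_ring_1"
  assumes h2: "2*u*v - t*v^2 = 1" and h1: "u^2 - v^2 = 0" and h3: "u^2 - t*u*v + v^2 = 1"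
  shows "u - v = 0"
proof -
  have "(u-v)*(u-v) - t*v*(u-v) = (u^2 - t*u*v + v^2) - (2*u*v - t*v^2)"
    by (simp add: algebra_simps power2_eq_square)
  hence s1: "t*v*(u-v) = (u-v)*(u-v)" using h2 h3 by simp
  have "(u-v)*(u-v) + 2*v*(u-v) = u^2 - v^2" by (simp add: algebra_simps power2_eq_square)
  hence s2: "(u-v)*(u-v) = -(2*v*(u-v))" using h1 by (simp add: eq_neg_iff_add_eq_0)
  have "u - v = (u-v)*(2*u*v - t*v^2)" using h2 by simp
  also have "\<dots> = 2*v*v*(u-v) + 2*v*((u-v)*(u-v)) - v*(t*v*(u-v))"
    by (simp add: algebra_simps power2_eq_square)
  also have "\<dots> = 0" unfolding s1 s2 by (simp add: algebra_simps)
  finally show ?thesis .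
qed

lemma hY_alg:
  fixes P Q u v t X Y :: "'a::comm_ring_1"
  assumes "P = Q * u - u * v" "Q = t * u - v" "P = t * X - Y" "X = u^2 - v^2"
  shows "Y = 2*u*v - t*v^2"
proof -
  have "Y = t * X - P" using assms(3) by simp
  also have "\<dots> = 2*u*v - t*v^2" unfolding assms(1,2,4) by (simp add: algebra_simps power2_eq_square)
  finally show ?thesis .
qed

theorem mainTheorem19:
  fixes M :: "'a::comm_ring_1 mat" and k n :: nat
  assumes "M \<in> carrier_mat 2 2"
    and "det M = 1"
    and "\<not> zero_divisor (M $$ (0, 1)) \<or> \<not> zero_divisor (M $$ (1, 0))"
    and "n = 2 * k + 1"
  shows "M ^\<^sub>m n = - 1\<^sub>m 2 \<longleftrightarrow>
         eval_int_poly (fpoly (k + 1)) (mat_trace M) - eval_int_poly (fpoly k) (mat_trace M) = 0"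
proof -
  note A = assms(1)
  define t where "t = mat_trace M"
  have tt: "t = M$$(0,0) + M$$(1,1)" using A unfolding t_def mat_trace_def by (simp add: numeral_2_eq_2)
  have d: "M$$(0,0)*M$$(1,1) - M$$(0,1)*M$$(1,0) = 1" using assms(2) det2[OF A] by simp
  define u where "u = G t (k+1)"
  define v where "v = G t k"
  define X where "X = G t (2*k+1)"
  define Y where "Y = G t (2*k)"
  have pw: "M ^\<^sub>m n = mat 2 2 (\<lambda>(i,j). X * M $$ (i,j) - (if i = j then Y else 0))"
    using Mpow[OF A d tt, of "2*k"] assms(4) unfolding X_def Y_def by simp
  have cas: "u^2 - t*u*v + v^2 = 1" using cassini[of t k] unfolding u_def v_def by simp
  have hX: "X = u^2 - v^2" using addG[of t k k] unfolding X_def u_def v_def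
    by (simp add: power2_eq_square mult_2)
  have "G t (k+1+k+1) = G t (k+1+1) * u - u * v" using addG[of t "k+1" k] unfolding u_def v_def
    by (simp add: algebra_simps)
  moreover have "G t (k+1+1) = t * u - v" unfolding u_def v_def by simp
  moreover have "G t (k+1+k+1) = t * X - Y" unfolding X_def Y_def
    by (metis G.simps(3) Suc_eq_plus1 add_Suc mult_2)
  ultimately have hY: "Y = 2*u*v - t*v^2" using hX
    by (rule hY_alg)
  have lhs: "eval_int_poly (fpoly (k + 1)) (mat_trace M) - eval_int_poly (fpoly k) (mat_trace M) = u - v"
    unfolding evalG u_def v_def t_def by simp
  show ?thesis unfolding lhs
  proof
    assume E: "M ^\<^sub>m n = - 1\<^sub>m 2"
    have e01: "X * M $$ (0,1) = 0" using arg_cong[OF E, of "\<lambda>B. B $$ (0,1)"] unfolding pw by simp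
    have e10: "X * M $$ (1,0) = 0" using arg_cong[OF E, of "\<lambda>B. B $$ (1,0)"] unfolding pw by simp
    have e00: "X * M $$ (0,0) - Y = -1" using arg_cong[OF E, of "\<lambda>B. B $$ (0,0)"] unfolding pw by simp
    have X0: "X = 0"
    proof (rule ccontr)
      assume "X \<noteq> 0"
      hence "zero_divisor (M $$ (0, 1))" "zero_divisor (M $$ (1, 0))"
        using e01 e10 unfolding zero_divisor_def by (auto simp: mult.commute)
      thus False using assms(3) by blast
    qed
    hence Y1: "Y = 1" using e00 by simp
    show "u - v = 0" using key_alg[of u v t] hY Y1 hX X0 cas by simp
  next
    assume uv: "u - v = 0"
    hence uv': "u = v" by simp
    have X0: "X = 0" using hX uv' by simp
    have Y1: "Y = 1" using hY cas uv' by (simp add: algebra_simps power2_eq_square)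
    show "M ^\<^sub>m n = - 1\<^sub>m 2" unfolding pw X0 Y1
      by (rule eq_matI) auto
  qed
qed

end
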